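(* In a network satisfying (H1) and (H2), let $V$ be an intermediate species, let $\widetilde Y$ be the enzyme of the connected component containing $V$, and let $Y$ be a non-intermediate species that is the enzyme of some connected component whose set of substrates/products equals $\mathscr{S}_V$. Let $X$ be a non-intermediate species with $X\in\mathscr{S}^{(\alpha)}$ for some $\alpha\ge1$ and $Y,\widetilde Y\notin\mathscr{S}^{(\alpha)}$. If a monomial $y^r v$ ($r\ge0$) appears in $x^{(\ell)}$ for some $\ell\ge1$, then $X\in\mathscr{S}_V$. Moreover, either $V$ reacts to $X$, or $r\ge1$, $\ell\ge2$, and a monomial $y^t v$ with $t<r$ appears in $z_w^{(i)}$ for some $i\le\ell-2$, for a species $Z_w$ involved in a block of reactions $Y+Z_w\rightleftarrows W\to Y+X$ (reactions $Y+Z_w\to W$, $W\to Y+Z_w$, $W\to Y+X$). In the latter case, if $\ell$ is the smallest positive integer such that some monomial $y^{r'}v$ ($r'\ge0$) appears in $x^{(\ell)}$, then $t=r-1$.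
   Context: Species are capital letters, concentrations lower-case letters. Mass-action system: $\dot{\mathbf{x}}=\sum_{y\to y'}k_{yy'}\mathbf{x}^y(y'-y)$, rates $k_{yy'}>0$. Total derivative: $\dot\varphi=\sum_i\frac{\partial\varphi}{\partial x_i}\dot x_i$ with $\dot x_i$ replaced by the right-hand side; $\varphi^{(\ell)}$ the $\ell$-th iterate ($\varphi^{(0)}=\varphi$); a monomial appears if its coefficient (a polynomial in rate constants) is nonzero. (H1) Every connected component has the form $Y+S_0\rightleftarrows U_1\to Y+S_1\rightleftarrows\cdots\rightleftarrows U_L\to Y+S_L$ (reactions $Y+S_{j-1}\to U_j$, $U_j\to Y+S_{j-1}$, $U_j\to Y+S_j$), unique enzyme $Y$; intermediates distinct throughout the network; non-intermediates of a component pairwise distinct but may appear in other components; each complex in a unique component. $\mathscr{S}_U$ = set of substrates/products of the component containing intermediate $U$. (H2) A partition $\mathscr{S}^{(0)}\sqcup\cdots\sqcup\mathscr{S}^{(M)}$ ($M\ge2$, nonempty, $\mathscr{S}^{(0)}$ the intermediates) with: for each intermediate $U$ with enzyme $Y$, some $\alpha\ge1$ has $\mathscr{S}_U\subseteq\mathscr{S}^{(\alpha)}$, $Y\notin\mathscr{S}^{(\alpha)}$. An intermediate $U$ reacts to a non-intermediate $X_1$ if there is a reaction $U\to X_1+X_2$ with $X_2$ non-intermediate. *)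

theory Defs
  imports Main "HOL-Library.Multiset" "HOL-Library.Poly_Mapping"
begin

text \<open>A connected component Y+S_0 <-> U_1 -> Y+S_1 <-> ... <-> U_L -> Y+S_L is given by a
triple (Y, [S_0,...,S_L], [U_1,...,U_L]).\<close>

type_synonym 's complex = "'s multiset"
type_synonym 's reaction = "'s complex \<times> 's complex"
type_synonym 's component = "'s \<times> 's list \<times> 's list"

fun comp_rxns :: "'s component \<Rightarrow> 's reaction set" where
  "comp_rxns (Y, Ss, Us) =
     (\<Union>j<length Us. {({#Y, Ss!j#}, {#Us!j#}), ({#Us!j#}, {#Y, Ss!j#}),
                      ({#Us!j#}, {#Y, Ss!(Suc j)#})})"

fun comp_cplx :: "'s component \<Rightarrow> 's complex set" where
  "comp_cplx (Y, Ss, Us) =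
     {{#Y, Ss!j#} | j. j \<le> length Us} \<union> {{#Us!j#} | j. j < length Us}"

fun comp_species :: "'s component \<Rightarrow> 's set" where
  "comp_species (Y, Ss, Us) = insert Y (set Ss \<union> set Us)"

fun comp_inter :: "'s component \<Rightarrow> 's set" where
  "comp_inter (Y, Ss, Us) = set Us"

definition rxns :: "'s component set \<Rightarrow> 's reaction set" where
  "rxns C = (\<Union>c\<in>C. comp_rxns c)"

definition species :: "'s component set \<Rightarrow> 's set" where
  "species C = (\<Union>c\<in>C. comp_species c)"

definition intermediates :: "'s component set \<Rightarrow> 's set" where
  "intermediates C = (\<Union>c\<in>C. comp_inter c)"

definition H1 :: "'s component set \<Rightarrow> bool" where
  "H1 C \<longleftrightarrow> finite C \<and>
     (\<forall>(Y, Ss, Us)\<in>C. Us \<noteq> [] \<and> length Ss = Suc (length Us) \<and> distinct (Y # Ss)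
        \<and> distinct Us \<and> Y \<notin> intermediates C \<and> set Ss \<inter> intermediates C = {}) \<and>
     (\<forall>c1\<in>C. \<forall>c2\<in>C. c1 \<noteq> c2 \<longrightarrow>
        comp_inter c1 \<inter> comp_inter c2 = {} \<and> comp_cplx c1 \<inter> comp_cplx c2 = {})"

definition H2 :: "'s component set \<Rightarrow> (nat \<Rightarrow> 's set) \<Rightarrow> nat \<Rightarrow> bool" where
  "H2 C P M \<longleftrightarrow> M \<ge> 2 \<and>
     (\<Union>\<alpha>\<in>{..M}. P \<alpha>) = species C \<and>
     (\<forall>\<alpha>\<le>M. P \<alpha> \<noteq> {}) \<and>
     (\<forall>\<alpha>\<le>M. \<forall>\<beta>\<le>M. \<alpha> \<noteq> \<beta> \<longrightarrow> P \<alpha> \<inter> P \<beta> = {}) \<and>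
     P 0 = intermediates C \<and>
     (\<forall>(Y, Ss, Us)\<in>C. \<forall>U\<in>set Us. \<exists>\<alpha>. 1 \<le> \<alpha> \<and> \<alpha> \<le> M \<and> set Ss \<subseteq> P \<alpha> \<and> Y \<notin> P \<alpha>)"

text \<open>Polynomials with integer coefficients in the variables x_s (concentrations, Xv s) and
k_r (rate constants, Kv r).\<close>

datatype 's var = Xv 's | Kv "'s reaction"
type_synonym 's monom = "'s var \<Rightarrow>\<^sub>0 nat"
type_synonym 's poly = "'s monom \<Rightarrow>\<^sub>0 int"

definition xmono :: "'s complex \<Rightarrow> 's monom" where
  "xmono y = (\<Sum>s\<in>set_mset y. Poly_Mapping.single (Xv s) (count y s))"

definition xvar :: "'s \<Rightarrow> 's poly" where
  "xvar s = Poly_Mapping.single (Poly_Mapping.single (Xv s) 1) 1"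

definition pdiff :: "'s var \<Rightarrow> 's poly \<Rightarrow> 's poly" where
  "pdiff v p = (\<Sum>m\<in>Poly_Mapping.keys p. Poly_Mapping.single (m - Poly_Mapping.single v (1::nat))
                     (Poly_Mapping.lookup p m * int (Poly_Mapping.lookup m v)))"

definition rhs :: "'s component set \<Rightarrow> 's \<Rightarrow> 's poly" where
  "rhs C s = (\<Sum>r\<in>rxns C. Poly_Mapping.single
                 (Poly_Mapping.single (Kv r) 1 + xmono (fst r))
                 (int (count (snd r) s) - int (count (fst r) s)))"

definition tder :: "'s component set \<Rightarrow> 's poly \<Rightarrow> 's poly" where
  "tder C \<phi> = (\<Sum>s\<in>species C. pdiff (Xv s) \<phi> * rhs C s)"

abbreviation iter_tder :: "'s component set \<Rightarrow> nat \<Rightarrow> 's poly \<Rightarrow> 's poly" where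
  "iter_tder C l \<equiv> tder C ^^ l"

text \<open>The monomial x^e (e an exponent vector on species) appears in p iff its coefficient,
a polynomial in the rate constants, is nonzero.\<close>
definition appears :: "('s \<Rightarrow> nat) \<Rightarrow> 's poly \<Rightarrow> bool" where
  "appears e p \<longleftrightarrow> (\<exists>m\<in>Poly_Mapping.keys p. \<forall>s. Poly_Mapping.lookup m (Xv s) = e s)"

definition yv_mono :: "'s \<Rightarrow> nat \<Rightarrow> 's \<Rightarrow> ('s \<Rightarrow> nat)" where
  "yv_mono Y r V = (\<lambda>s. if s = Y then r else if s = V then 1 else 0)"

definition reacts_to :: "'s component set \<Rightarrow> 's \<Rightarrow> 's \<Rightarrow> bool" where
  "reacts_to C U X1 \<longleftrightarrow>
     (\<exists>X2. X2 \<notin> intermediates C \<and> ({#U#}, {#X1, X2#}) \<in> rxns C)"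

end

theory Submission
  imports Defs
begin


lemma pm_induct [case_names zero add]:
  assumes "P 0" and "\<And>f a b. P f \<Longrightarrow> P (Poly_Mapping.single a b + f)"
  shows "P f"
proof (induction f rule: Poly_Mapping.update_induct)
  case const then show ?case using assms(1) by simp
next
  case (update f a b)
  have "Poly_Mapping.update a b f = Poly_Mapping.single a b + f"
    using update(1)
    by (intro poly_mapping_eqI) (auto simp: lookup_update lookup_add lookup_single when_def in_keys_iff)
  then show ?case using assms(2) update by simp
qed

lemma pdiff_add: "pdiff v (p + q) = pdiff v p + pdiff v q"
  unfolding pdiff_def
  by (rule setsum_keys_plus_distrib) (simp_all add: distrib_right single_add)

lemma pdiff_zero[simp]: "pdiff v 0 = 0"
  by (simp add: pdiff_def)

lemma pdiff_single: "pdiff v (Poly_Mapping.single m c) =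
   Poly_Mapping.single (m - Poly_Mapping.single v 1) (c * int (Poly_Mapping.lookup m v))"
  by (cases "c = 0") (simp_all add: pdiff_def)

lemma mono_sub_add:
  fixes m n :: "'a \<Rightarrow>\<^sub>0 nat"
  assumes "Poly_Mapping.lookup m v \<noteq> 0"
  shows "m - Poly_Mapping.single v 1 + n = m + n - Poly_Mapping.single v 1"
  using assms by (intro poly_mapping_eqI) (auto simp: lookup_add lookup_minus lookup_single when_def)

lemma pdiff_single_mult:
  "pdiff v (Poly_Mapping.single m a * Poly_Mapping.single n b) =
   pdiff v (Poly_Mapping.single m a) * Poly_Mapping.single n b
   + Poly_Mapping.single m a * pdiff v (Poly_Mapping.single n b)"
proof -
  have e1: "Poly_Mapping.single (m - Poly_Mapping.single v 1) (a * int (Poly_Mapping.lookup m v)) * Poly_Mapping.single n b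
     = Poly_Mapping.single (m + n - Poly_Mapping.single v 1) (a * b * int (Poly_Mapping.lookup m v))"
  proof (cases "Poly_Mapping.lookup m v = 0")
    case False
    then have "m - Poly_Mapping.single v 1 + n = m + n - Poly_Mapping.single v 1" by (rule mono_sub_add)
    then show ?thesis by (simp add: mult_single ac_simps)
  qed simp
  have e2: "Poly_Mapping.single m a * Poly_Mapping.single (n - Poly_Mapping.single v 1) (b * int (Poly_Mapping.lookup n v))
     = Poly_Mapping.single (m + n - Poly_Mapping.single v 1) (a * b * int (Poly_Mapping.lookup n v))"
  proof (cases "Poly_Mapping.lookup n v = 0")
    case False
    then have "n - Poly_Mapping.single v 1 + m = n + m - Poly_Mapping.single v 1" by (rule mono_sub_add)
    then show ?thesis by (simp add: mult_single ac_simps)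
  qed simp
  show ?thesis
  proof -
    have "pdiff v (Poly_Mapping.single m a * Poly_Mapping.single n b)
       = Poly_Mapping.single (m + n - Poly_Mapping.single v 1) (a * b * int (Poly_Mapping.lookup m v))
         + Poly_Mapping.single (m + n - Poly_Mapping.single v 1) (a * b * int (Poly_Mapping.lookup n v))"
      by (simp only: mult_single pdiff_single single_add[symmetric] lookup_add)
        (simp add: algebra_simps)
    also have "\<dots> = pdiff v (Poly_Mapping.single m a) * Poly_Mapping.single n b
   + Poly_Mapping.single m a * pdiff v (Poly_Mapping.single n b)"
      by (simp only: pdiff_single e1 e2)
    finally show ?thesis .
  qed
qed

lemma pdiff_mult: "pdiff v (p * q) = pdiff v p * q + p * pdiff v q"
proof (induction p rule: pm_induct)
  case zero then show ?case by simp
next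
  case (add f a b)
  have "pdiff v (Poly_Mapping.single a b * q) = pdiff v (Poly_Mapping.single a b) * q
      + Poly_Mapping.single a b * pdiff v q"
  proof (induction q rule: pm_induct)
    case zero then show ?case by simp
  next
    case (add g c d)
    then show ?case
      by (simp add: distrib_left pdiff_add pdiff_single_mult algebra_simps)
  qed
  with add show ?case by (simp add: distrib_right pdiff_add algebra_simps)
qed

lemma tder_add: "tder C (p + q) = tder C p + tder C q"
  by (simp add: tder_def pdiff_add distrib_right sum.distrib)

lemma tder_zero[simp]: "tder C 0 = 0"
  by (simp add: tder_def)

lemma tder_mult: "tder C (p * q) = tder C p * q + p * tder C q"
proof -
  have "tder C (p * q) = (\<Sum>s\<in>species C. pdiff (Xv s) p * rhs C s * q + p * (pdiff (Xv s) q * rhs C s))"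
    unfolding tder_def pdiff_mult by (intro sum.cong) (simp_all add: algebra_simps)
  also have "\<dots> = tder C p * q + p * tder C q"
    unfolding tder_def sum.distrib sum_distrib_left sum_distrib_right ..
  finally show ?thesis .
qed

lemma tder_const:
  assumes "\<And>s. Poly_Mapping.lookup m (Xv s) = 0"
  shows "tder C (Poly_Mapping.single m c) = 0"
  by (simp add: tder_def pdiff_single assms)

lemma pdiff_xvar: "pdiff (Xv s) (xvar z) = (if s = z then 1 else 0)"
  by (auto simp: xvar_def pdiff_single lookup_single)

lemma tder_xvar:
  assumes "finite (species C)"
  shows "tder C (xvar z) = (if z \<in> species C then rhs C z else 0)"
proof -
  have "tder C (xvar z) = (\<Sum>s\<in>species C. if s = z then rhs C z else 0)"
    unfolding tder_def pdiff_xvar by (intro sum.cong) auto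
  then show ?thesis using assms by simp
qed

lemma iter_add: "(tder C ^^ n) (p + q) = (tder C ^^ n) p + (tder C ^^ n) q"
  by (induction n) (simp_all add: tder_add)

lemma iter_zero[simp]: "(tder C ^^ n) 0 = 0"
  by (induction n) simp_all

lemma iter_sum: "(tder C ^^ n) (sum f A) = (\<Sum>a\<in>A. (tder C ^^ n) (f a))"
  using sum_comp_morphism[of "tder C ^^ n" f A] by (simp add: iter_add o_def)

lemma iter_const:
  assumes "\<And>s. Poly_Mapping.lookup m (Xv s) = 0"
  shows "(tder C ^^ n) (Poly_Mapping.single m c * p) = Poly_Mapping.single m c * (tder C ^^ n) p"
  by (induction n) (simp_all add: tder_mult tder_const[OF assms])

lemma iter_leibniz_keys:
  "Poly_Mapping.keys ((tder C ^^ n) (p * q)) \<subseteq>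
    {a + b | a b i j. i + j = n \<and> a \<in> Poly_Mapping.keys ((tder C ^^ i) p)
        \<and> b \<in> Poly_Mapping.keys ((tder C ^^ j) q)}"
proof (induction n arbitrary: p q)
  case 0
  show ?case
  proof
    fix m assume "m \<in> Poly_Mapping.keys ((tder C ^^ 0) (p * q))"
    then obtain a b where "m = a + b" "a \<in> Poly_Mapping.keys p" "b \<in> Poly_Mapping.keys q"
      using keys_mult[of p q] by auto
    then show "m \<in> {a + b | a b i j. i + j = 0 \<and> a \<in> Poly_Mapping.keys ((tder C ^^ i) p)
        \<and> b \<in> Poly_Mapping.keys ((tder C ^^ j) q)}"
      by (intro CollectI exI[of _ a] exI[of _ b] exI[of _ 0] exI[of _ 0]) simp
  qed
next
  case (Suc n)
  have eq: "(tder C ^^ Suc n) (p * q) = (tder C ^^ n) (tder C p * q) + (tder C ^^ n) (p * tder C q)"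
    by (simp only: funpow_Suc_right o_def tder_mult iter_add)
  show ?case
  proof
    fix m assume "m \<in> Poly_Mapping.keys ((tder C ^^ Suc n) (p * q))"
    then have "m \<in> Poly_Mapping.keys ((tder C ^^ n) (tder C p * q)) \<or>
               m \<in> Poly_Mapping.keys ((tder C ^^ n) (p * tder C q))"
      using keys_add[of "(tder C ^^ n) (tder C p * q)" "(tder C ^^ n) (p * tder C q)"] unfolding eq by (simp add: subset_iff)
    then show "m \<in> {a + b | a b i j. i + j = Suc n \<and> a \<in> Poly_Mapping.keys ((tder C ^^ i) p)
        \<and> b \<in> Poly_Mapping.keys ((tder C ^^ j) q)}"
    proof
      assume "m \<in> Poly_Mapping.keys ((tder C ^^ n) (tder C p * q))"
      then obtain a b i j where "m = a + b" "i + j = n" "a \<in> Poly_Mapping.keys ((tder C ^^ i) (tder C p))"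
        "b \<in> Poly_Mapping.keys ((tder C ^^ j) q)" using Suc.IH by blast
      moreover have "(tder C ^^ Suc i) p = (tder C ^^ i) (tder C p)" by (simp only: funpow_Suc_right o_def)
      ultimately show ?thesis
        by (intro CollectI exI[of _ a] exI[of _ b] exI[of _ "Suc i"] exI[of _ j]) simp
    next
      assume "m \<in> Poly_Mapping.keys ((tder C ^^ n) (p * tder C q))"
      then obtain a b i j where "m = a + b" "i + j = n" "a \<in> Poly_Mapping.keys ((tder C ^^ i) p)"
        "b \<in> Poly_Mapping.keys ((tder C ^^ j) (tder C q))" using Suc.IH by blast
      moreover have "(tder C ^^ Suc j) q = (tder C ^^ j) (tder C q)" by (simp only: funpow_Suc_right o_def)
      ultimately show ?thesis
        by (intro CollectI exI[of _ a] exI[of _ b] exI[of _ i] exI[of _ "Suc j"]) simp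
    qed
  qed
qed



lemma rxns_cases:
  assumes "r \<in> rxns C"
  obtains E Ss Us j where "(E,Ss,Us) \<in> C" "j < length Us"
    "r = ({#E, Ss!j#}, {#Us!j#}) \<or> r = ({#Us!j#}, {#E, Ss!j#}) \<or> r = ({#Us!j#}, {#E, Ss!(Suc j)#})"
proof -
  from assms obtain c where c: "c \<in> C" "r \<in> comp_rxns c" by (auto simp: rxns_def)
  obtain E Ss Us where "c = (E,Ss,Us)" by (cases c)
  with c that show ?thesis by auto
qed

lemma rxns_I1: "(E,Ss,Us) \<in> C \<Longrightarrow> j < length Us \<Longrightarrow> ({#E, Ss!j#}, {#Us!j#}) \<in> rxns C"
  by (auto simp: rxns_def intro!: bexI[of _ "(E,Ss,Us)"])
lemma rxns_I2: "(E,Ss,Us) \<in> C \<Longrightarrow> j < length Us \<Longrightarrow> ({#Us!j#}, {#E, Ss!j#}) \<in> rxns C"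
  by (auto simp: rxns_def intro!: bexI[of _ "(E,Ss,Us)"])
lemma rxns_I3: "(E,Ss,Us) \<in> C \<Longrightarrow> j < length Us \<Longrightarrow> ({#Us!j#}, {#E, Ss!(Suc j)#}) \<in> rxns C"
  by (auto simp: rxns_def intro!: bexI[of _ "(E,Ss,Us)"])

lemma h1_comp:
  assumes "H1 C" "(E,Ss,Us) \<in> C"
  shows "Us \<noteq> [] \<and> length Ss = Suc (length Us) \<and> distinct (E # Ss) \<and> distinct Us
        \<and> E \<notin> intermediates C \<and> set Ss \<inter> intermediates C = {}"
  using assms unfolding H1_def by fast

lemma inter_mem: "(E,Ss,Us) \<in> C \<Longrightarrow> u \<in> set Us \<Longrightarrow> u \<in> intermediates C"
  by (auto simp: intermediates_def intro!: bexI[of _ "(E,Ss,Us)"])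

lemma h1_disj:
  assumes "H1 C" "c1 \<in> C" "c2 \<in> C" "c1 \<noteq> c2"
  shows "comp_inter c1 \<inter> comp_inter c2 = {} \<and> comp_cplx c1 \<inter> comp_cplx c2 = {}"
proof -
  have h: "\<forall>c1\<in>C. \<forall>c2\<in>C. c1 \<noteq> c2 \<longrightarrow> comp_inter c1 \<inter> comp_inter c2 = {} \<and> comp_cplx c1 \<inter> comp_cplx c2 = {}"
    using assms(1) unfolding H1_def by (elim conjE)
  show ?thesis using h[rule_format, OF assms(2,3,4)] .
qed

lemma inter_unique:
  assumes "H1 C" "(E,Ss,Us) \<in> C" "(E',Ss',Us') \<in> C" "u \<in> set Us" "u \<in> set Us'"
  shows "(E,Ss,Us) = (E',Ss',Us')"
proof (rule ccontr)
  assume "(E,Ss,Us) \<noteq> (E',Ss',Us')"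
  with assms(1-3) have "comp_inter (E,Ss,Us) \<inter> comp_inter (E',Ss',Us') = {}"
    using h1_disj by blast
  with assms(4,5) show False by auto
qed

lemma cplx_unique:
  assumes "H1 C" "(E,Ss,Us) \<in> C" "(E',Ss',Us') \<in> C" "j \<le> length Us" "j' \<le> length Us'"
    "{#E, Ss!j#} = {#E', Ss'!j'#}"
  shows "(E,Ss,Us) = (E',Ss',Us')"
proof (rule ccontr)
  assume "(E,Ss,Us) \<noteq> (E',Ss',Us')"
  with assms(1-3) have "comp_cplx (E,Ss,Us) \<inter> comp_cplx (E',Ss',Us') = {}"
    using h1_disj by blast
  moreover have "{#E, Ss!j#} \<in> comp_cplx (E,Ss,Us)" using assms(4) by auto
  moreover have "{#E, Ss!j#} \<in> comp_cplx (E',Ss',Us')" using assms(5,6) by auto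
  ultimately show False by blast
qed

lemma finite_species: "H1 C \<Longrightarrow> finite (species C)"
proof -
  assume "H1 C"
  then have "finite C" by (simp add: H1_def)
  moreover have "finite (comp_species c)" for c :: "'a component"
    by (cases c) simp
  ultimately show ?thesis by (simp add: species_def)
qed

lemma lookup_single_Xv: "Poly_Mapping.lookup (Poly_Mapping.single (Xv z) (1::nat)) (Xv s) = (if s = z then 1 else 0)"
  by (auto simp: lookup_single when_def)

lemma app0: "appears e (xvar z) \<longleftrightarrow> (\<forall>s. e s = (if s = z then 1 else 0))"
proof -
  have "appears e (xvar z) \<longleftrightarrow> (\<forall>s. Poly_Mapping.lookup (Poly_Mapping.single (Xv z) (1::nat)) (Xv s) = e s)"
    by (simp add: appears_def xvar_def del: One_nat_def)
  also have "\<dots> \<longleftrightarrow> (\<forall>s. e s = (if s = z then 1 else 0))"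
    unfolding lookup_single_Xv by metis
  finally show ?thesis .
qed

lemma xmono1: "xmono {#U#} = Poly_Mapping.single (Xv U) 1"
  by (simp add: xmono_def)

lemma xmono2: "A \<noteq> B \<Longrightarrow> xmono {#A, B#} = Poly_Mapping.single (Xv A) 1 + Poly_Mapping.single (Xv B) 1"
  by (simp add: xmono_def)

lemma xvar_mult: "xvar A * xvar B = Poly_Mapping.single (Poly_Mapping.single (Xv A) 1 + Poly_Mapping.single (Xv B) 1) 1"
  by (simp add: xvar_def mult_single)

lemma finite_rxns: "H1 C \<Longrightarrow> finite (rxns C)"
proof -
  assume "H1 C"
  then have "finite C" by (simp add: H1_def)
  moreover have "finite (comp_rxns c)" for c :: "'a component"
    by (cases c) auto
  ultimately show ?thesis by (simp add: rxns_def)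
qed

lemma keys_const_mult:
  assumes "m \<in> Poly_Mapping.keys (Poly_Mapping.single k c * p)"
  obtains b where "m = k + b" "b \<in> Poly_Mapping.keys p"
  using keys_mult[of "Poly_Mapping.single k c" p] assms
  by (auto split: if_splits)

lemma dec:
  assumes h1: "H1 C" and app: "appears e ((tder C ^^ Suc n) (xvar z))"
  shows "\<exists>r\<in>rxns C. count (snd r) z \<noteq> count (fst r) z \<and>
     ((\<exists>U. fst r = {#U#} \<and> appears e ((tder C ^^ n) (xvar U))) \<or>
      (\<exists>A B i j e1 e2. fst r = {#A, B#} \<and> A \<noteq> B \<and> i + j = n \<and> e = (\<lambda>s. e1 s + e2 s)
          \<and> appears e1 ((tder C ^^ i) (xvar A)) \<and> appears e2 ((tder C ^^ j) (xvar B))))"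
proof -
  from app obtain m where m: "m \<in> Poly_Mapping.keys ((tder C ^^ Suc n) (xvar z))"
    "\<forall>s. Poly_Mapping.lookup m (Xv s) = e s"
    unfolding appears_def by blast
  have eq1: "(tder C ^^ Suc n) (xvar z) = (tder C ^^ n) (tder C (xvar z))"
    by (simp only: funpow_Suc_right o_def)
  have zs: "z \<in> species C"
  proof (rule ccontr)
    assume "z \<notin> species C"
    then have "(tder C ^^ Suc n) (xvar z) = 0"
      unfolding eq1 tder_xvar[OF finite_species[OF h1]] by simp
    with m show False by simp
  qed
  define cf where "cf r = int (count (snd r) z) - int (count (fst r) z)" for r :: "'a reaction"
  define kk where "kk r = Poly_Mapping.single (Kv r) (1::nat)" for r :: "'a reaction"
  have rhs_eq: "rhs C z = (\<Sum>r\<in>rxns C. Poly_Mapping.single (kk r) (cf r) * Poly_Mapping.single (xmono (fst r)) 1)"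
    unfolding rhs_def cf_def kk_def by (simp add: mult_single)
  have "(tder C ^^ Suc n) (xvar z) = (\<Sum>r\<in>rxns C. Poly_Mapping.single (kk r) (cf r) * (tder C ^^ n) (Poly_Mapping.single (xmono (fst r)) 1))"
  proof -
    have kx: "Poly_Mapping.lookup (kk r) (Xv s) = 0" for r s
      by (simp add: kk_def lookup_single)
    have "(tder C ^^ Suc n) (xvar z) = (tder C ^^ n) (rhs C z)"
      unfolding eq1 tder_xvar[OF finite_species[OF h1]] using zs by simp
    also have "\<dots> = (\<Sum>r\<in>rxns C. (tder C ^^ n) (Poly_Mapping.single (kk r) (cf r) * Poly_Mapping.single (xmono (fst r)) 1))"
      unfolding rhs_eq by (rule iter_sum)
    also have "\<dots> = (\<Sum>r\<in>rxns C. Poly_Mapping.single (kk r) (cf r) * (tder C ^^ n) (Poly_Mapping.single (xmono (fst r)) 1))"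
      by (intro sum.cong refl iter_const kx)
    finally show ?thesis .
  qed
  with m(1) have "m \<in> Poly_Mapping.keys (\<Sum>r\<in>rxns C. Poly_Mapping.single (kk r) (cf r) * (tder C ^^ n) (Poly_Mapping.single (xmono (fst r)) 1))"
    by simp
  then have "m \<in> (\<Union>r\<in>rxns C. Poly_Mapping.keys (Poly_Mapping.single (kk r) (cf r) * (tder C ^^ n) (Poly_Mapping.single (xmono (fst r)) 1)))"
    by (rule subsetD[OF keys_sum])
  then obtain r where r: "r \<in> rxns C"
    "m \<in> Poly_Mapping.keys (Poly_Mapping.single (kk r) (cf r) * (tder C ^^ n) (Poly_Mapping.single (xmono (fst r)) 1))"
    by blast
  then have cfnz: "cf r \<noteq> 0" by auto
  from r(2) obtain b where b: "m = kk r + b" "b \<in> Poly_Mapping.keys ((tder C ^^ n) (Poly_Mapping.single (xmono (fst r)) 1))"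
    by (rule keys_const_mult)
  have bl: "Poly_Mapping.lookup b (Xv s) = e s" for s
    using m(2) b(1) by (simp add: kk_def lookup_add lookup_single)
  have cnt: "count (snd r) z \<noteq> count (fst r) z" using cfnz by (simp add: cf_def)
  from r(1) obtain E Ss Us j where c: "(E,Ss,Us) \<in> C" "j < length Us"
    "r = ({#E, Ss!j#}, {#Us!j#}) \<or> r = ({#Us!j#}, {#E, Ss!j#}) \<or> r = ({#Us!j#}, {#E, Ss!(Suc j)#})"
    by (rule rxns_cases)
  show ?thesis
  proof (cases "r = ({#E, Ss!j#}, {#Us!j#})")
    case True
    have hc: "length Ss = Suc (length Us)" "distinct (E # Ss)" using h1_comp[OF h1 c(1)] by auto
    then have neq: "E \<noteq> Ss!j" using c(2) by auto
    have "Poly_Mapping.single (xmono (fst r)) 1 = xvar E * xvar (Ss!j)"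
      using True neq by (simp add: xmono2 xvar_mult)
    with b(2) have "b \<in> Poly_Mapping.keys ((tder C ^^ n) (xvar E * xvar (Ss!j)))" by simp
    then have "b \<in> {a' + b' | a' b' i' j'. i' + j' = n \<and> a' \<in> Poly_Mapping.keys ((tder C ^^ i') (xvar E))
        \<and> b' \<in> Poly_Mapping.keys ((tder C ^^ j') (xvar (Ss!j)))}"
      by (rule subsetD[OF iter_leibniz_keys])
    then obtain a1 b1 i1 j1 where ab: "b = a1 + b1" "i1 + j1 = n"
      "a1 \<in> Poly_Mapping.keys ((tder C ^^ i1) (xvar E))" "b1 \<in> Poly_Mapping.keys ((tder C ^^ j1) (xvar (Ss!j)))"
      by blast
    have "appears (\<lambda>s. Poly_Mapping.lookup a1 (Xv s)) ((tder C ^^ i1) (xvar E))"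
      using ab(3) unfolding appears_def by blast
    moreover have "appears (\<lambda>s. Poly_Mapping.lookup b1 (Xv s)) ((tder C ^^ j1) (xvar (Ss!j)))"
      using ab(4) unfolding appears_def by blast
    moreover have "e = (\<lambda>s. Poly_Mapping.lookup a1 (Xv s) + Poly_Mapping.lookup b1 (Xv s))"
      using bl ab(1) by (auto simp: lookup_add)
    ultimately show ?thesis using r(1) cnt True neq ab(2) by fastforce
  next
    case False
    then have "fst r = {#Us!j#}" using c(3) by auto
    moreover then have "appears e ((tder C ^^ n) (xvar (Us!j)))"
      using b(2) bl unfolding appears_def xvar_def by (auto simp: xmono1)
    ultimately show ?thesis using r(1) cnt by blast
  qed
qed



abbreviation Ap where "Ap C Y V z n r \<equiv> appears (yv_mono Y r V) ((tder C ^^ n) (xvar z))"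

lemma single_src:
  assumes "r \<in> rxns C" "fst r = {#U#}"
  obtains E Ss Us j where "(E,Ss,Us) \<in> C" "j < length Us" "U = Us!j"
    "snd r = {#E, Ss!j#} \<or> snd r = {#E, Ss!(Suc j)#}"
proof -
  from assms(1) obtain E Ss Us j where c: "(E,Ss,Us) \<in> C" "j < length Us"
    "r = ({#E, Ss!j#}, {#Us!j#}) \<or> r = ({#Us!j#}, {#E, Ss!j#}) \<or> r = ({#Us!j#}, {#E, Ss!(Suc j)#})"
    by (rule rxns_cases)
  with assms(2) that show ?thesis by auto
qed

lemma pair_src:
  assumes "r \<in> rxns C" "fst r = {#A, B#}"
  obtains E Ss Us j where "(E,Ss,Us) \<in> C" "j < length Us" "{#A, B#} = {#E, Ss!j#}"
    "snd r = {#Us!j#}"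
proof -
  from assms(1) obtain E Ss Us j where c: "(E,Ss,Us) \<in> C" "j < length Us"
    "r = ({#E, Ss!j#}, {#Us!j#}) \<or> r = ({#Us!j#}, {#E, Ss!j#}) \<or> r = ({#Us!j#}, {#E, Ss!(Suc j)#})"
    by (rule rxns_cases)
  with assms(2) that show ?thesis by auto
qed

lemma mset2_eq: "{#a, b#} = {#c, d#} \<longleftrightarrow> (a = c \<and> b = d) \<or> (a = d \<and> b = c)"
  by (auto simp: add_eq_conv_ex)

lemma inter_nth: "(E,Ss,Us) \<in> C \<Longrightarrow> j < length Us \<Longrightarrow> Us!j \<in> intermediates C"
  by (erule inter_mem) (erule nth_mem)

lemma nonint_E: "H1 C \<Longrightarrow> (E,Ss,Us) \<in> C \<Longrightarrow> E \<notin> intermediates C"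
  using h1_comp[of C E Ss Us] by simp

lemma nonint_S: "H1 C \<Longrightarrow> (E,Ss,Us) \<in> C \<Longrightarrow> k \<le> length Us \<Longrightarrow> Ss!k \<notin> intermediates C"
proof -
  assume a: "H1 C" "(E,Ss,Us) \<in> C" "k \<le> length Us"
  from h1_comp[OF a(1,2)] have "length Ss = Suc (length Us)" "set Ss \<inter> intermediates C = {}" by auto
  with a(3) show ?thesis by (metis disjoint_iff le_imp_less_Suc nth_mem)
qed

lemma py:
  assumes h1: "H1 C" and Yni: "Y \<notin> intermediates C"
    and app: "appears (\<lambda>s. if s = Y then q else 0) ((tder C ^^ n) (xvar z))"
  shows "n = 0 \<and> z = Y"
  using app
proof (induction n arbitrary: z q rule: less_induct)
  case (less n)
  show ?case
  proof (cases n)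
    case 0
    with less.prems have "\<forall>s. (if s = Y then q else 0) = (if s = z then 1 else 0)"
      by (simp add: app0)
    then have "z = Y" by (metis zero_neq_one)
    with 0 show ?thesis by simp
  next
    case (Suc n')
    from dec[OF h1 less.prems[unfolded Suc]] obtain r where r: "r \<in> rxns C"
      "(\<exists>U. fst r = {#U#} \<and> appears (\<lambda>s. if s = Y then q else 0) ((tder C ^^ n') (xvar U))) \<or>
      (\<exists>A B i j e1 e2. fst r = {#A, B#} \<and> A \<noteq> B \<and> i + j = n' \<and> (\<lambda>s. if s = Y then q else 0) = (\<lambda>s. e1 s + e2 s)
          \<and> appears e1 ((tder C ^^ i) (xvar A)) \<and> appears e2 ((tder C ^^ j) (xvar B)))"
      by blast
    from r(2) show ?thesis
    proof
      assume "\<exists>U. fst r = {#U#} \<and> appears (\<lambda>s. if s = Y then q else 0) ((tder C ^^ n') (xvar U))"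
      then obtain U where U: "fst r = {#U#}" "appears (\<lambda>s. if s = Y then q else 0) ((tder C ^^ n') (xvar U))"
        by blast
      from less.IH[OF _ U(2)] Suc have "U = Y" by simp
      moreover from r(1) U(1) obtain E Ss Us j where "(E,Ss,Us) \<in> C" "j < length Us" "U = Us!j"
        by (rule single_src)
      then have "U \<in> intermediates C" by (metis inter_mem nth_mem)
      ultimately show ?thesis using Yni by simp
    next
      assume "\<exists>A B i j e1 e2. fst r = {#A, B#} \<and> A \<noteq> B \<and> i + j = n' \<and> (\<lambda>s. if s = Y then q else 0) = (\<lambda>s. e1 s + e2 s)
          \<and> appears e1 ((tder C ^^ i) (xvar A)) \<and> appears e2 ((tder C ^^ j) (xvar B))"
      then obtain A B i j e1 e2 where ab: "A \<noteq> B" "i + j = n'" "(\<lambda>s. if s = Y then q else 0) = (\<lambda>s. e1 s + e2 s)"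
          "appears e1 ((tder C ^^ i) (xvar A))" "appears e2 ((tder C ^^ j) (xvar B))" by blast
      have "e1 = (\<lambda>s. if s = Y then e1 Y else 0)" "e2 = (\<lambda>s. if s = Y then e2 Y else 0)"
        using ab(3) by (auto simp: fun_eq_iff) (metis add_is_0)+
      with ab(4,5) have "appears (\<lambda>s. if s = Y then e1 Y else 0) ((tder C ^^ i) (xvar A))"
        "appears (\<lambda>s. if s = Y then e2 Y else 0) ((tder C ^^ j) (xvar B))" by simp_all
      from less.IH[OF _ this(1)] less.IH[OF _ this(2)] Suc ab(2) have "A = Y" "B = Y" by simp_all
      with ab(1) show ?thesis by simp
    qed
  qed
qed

lemma ap_dec:
  assumes h1: "H1 C" and Yni: "Y \<notin> intermediates C" and VY: "V \<noteq> Y"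
    and app: "Ap C Y V z (Suc n) r"
  shows "\<exists>\<rho>\<in>rxns C. count (snd \<rho>) z \<noteq> count (fst \<rho>) z \<and>
     ((\<exists>U. fst \<rho> = {#U#} \<and> Ap C Y V U n r) \<or>
      (\<exists>B. fst \<rho> = {#Y, B#} \<and> 1 \<le> r \<and> Ap C Y V B n (r - 1)))"
proof -
  from dec[OF h1 app] obtain \<rho> where \<rho>: "\<rho> \<in> rxns C" "count (snd \<rho>) z \<noteq> count (fst \<rho>) z"
      "(\<exists>U. fst \<rho> = {#U#} \<and> Ap C Y V U n r) \<or>
      (\<exists>A B i j e1 e2. fst \<rho> = {#A, B#} \<and> A \<noteq> B \<and> i + j = n \<and> yv_mono Y r V = (\<lambda>s. e1 s + e2 s)
          \<and> appears e1 ((tder C ^^ i) (xvar A)) \<and> appears e2 ((tder C ^^ j) (xvar B)))"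
    by blast
  from \<rho>(3) show ?thesis
  proof
    assume "\<exists>U. fst \<rho> = {#U#} \<and> Ap C Y V U n r"
    with \<rho>(1,2) show ?thesis by blast
  next
    assume "\<exists>A B i j e1 e2. fst \<rho> = {#A, B#} \<and> A \<noteq> B \<and> i + j = n \<and> yv_mono Y r V = (\<lambda>s. e1 s + e2 s)
          \<and> appears e1 ((tder C ^^ i) (xvar A)) \<and> appears e2 ((tder C ^^ j) (xvar B))"
    then obtain A B i j e1 e2 where ab: "fst \<rho> = {#A, B#}" "i + j = n" "yv_mono Y r V = (\<lambda>s. e1 s + e2 s)"
          "appears e1 ((tder C ^^ i) (xvar A))" "appears e2 ((tder C ^^ j) (xvar B))" by blast
    have ev: "e1 s + e2 s = (if s = Y then r else if s = V then 1 else 0)" for s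
      using ab(3) unfolding yv_mono_def by metis
    \<comment> \<open>generic: one factor carries V, the other is y\<close>
    have key: "\<exists>Bx. fst \<rho> = {#Y, Bx#} \<and> 1 \<le> r \<and> Ap C Y V Bx n (r - 1)"
      if sym: "fst \<rho> = {#A', B'#}" "i' + j' = n" "\<And>s. e1' s + e2' s = (if s = Y then r else if s = V then 1 else 0)"
          "appears e1' ((tder C ^^ i') (xvar A'))" "appears e2' ((tder C ^^ j') (xvar B'))" "e2' V = 0"
      for A' B' i' j' e1' e2'
    proof -
      have "e2' = (\<lambda>s. if s = Y then e2' Y else 0)"
      proof
        fix s show "e2' s = (if s = Y then e2' Y else 0)"
          using sym(3)[of s] sym(6) by (cases "s = Y"; cases "s = V") auto
      qed
      with sym(5) have "appears (\<lambda>s. if s = Y then e2' Y else 0) ((tder C ^^ j') (xvar B'))" by simp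
      from py[OF h1 Yni this] have j0: "j' = 0" "B' = Y" by auto
      with sym(5) have "\<forall>s. e2' s = (if s = Y then 1 else 0)" by (simp add: app0)
      then have e2Y: "e2' Y = 1" "\<And>s. s \<noteq> Y \<Longrightarrow> e2' s = 0" by auto
      have r1: "1 \<le> r" using sym(3)[of Y] e2Y(1) by simp
      have "e1' = yv_mono Y (r - 1) V"
      proof
        fix s show "e1' s = yv_mono Y (r - 1) V s"
          using sym(3)[of s] e2Y VY unfolding yv_mono_def by (cases "s = Y"; cases "s = V") auto
      qed
      with sym(4) j0 sym(2) have "Ap C Y V A' n (r - 1)" by simp
      moreover have "fst \<rho> = {#Y, A'#}" using sym(1) j0 by (simp add: add_mset_commute)
      ultimately show ?thesis using r1 by blast
    qed
    have "e1 V + e2 V = 1" using ev[of V] VY by simp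
    then have "e2 V = 0 \<or> e1 V = 0" by auto
    then have "\<exists>Bx. fst \<rho> = {#Y, Bx#} \<and> 1 \<le> r \<and> Ap C Y V Bx n (r - 1)"
    proof
      assume "e2 V = 0"
      show ?thesis by (rule key[OF ab(1,2) ev ab(4,5) \<open>e2 V = 0\<close>])
    next
      assume "e1 V = 0"
      have ab1': "fst \<rho> = {#B, A#}" using ab(1) by (simp add: add_mset_commute)
      have "j + i = n" using ab(2) by simp
      have ev': "e2 s + e1 s = (if s = Y then r else if s = V then 1 else 0)" for s
        using ev[of s] by simp
      show ?thesis by (rule key[OF ab1' \<open>j + i = n\<close> ev' ab(5,4) \<open>e1 V = 0\<close>])
    qed
    with \<rho>(1,2) show ?thesis by blast
  qed
qed

lemma ap0: "Ap C Y V z 0 r \<Longrightarrow> V \<noteq> Y \<Longrightarrow> z = V \<and> r = 0"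
proof -
  assume a: "Ap C Y V z 0 r" "V \<noteq> Y"
  then have h: "\<forall>s. yv_mono Y r V s = (if s = z then 1 else 0)" by (simp add: app0)
  from h[rule_format, of V] a(2) have "z = V" by (simp add: yv_mono_def split: if_splits)
  moreover from h[rule_format, of Y] a(2) this have "r = 0" by (simp add: yv_mono_def)
  ultimately show ?thesis by simp
qed

lemma inter_lem:
  assumes h1: "H1 C" and Yni: "Y \<notin> intermediates C" and VY: "V \<noteq> Y"
    and c: "(E,Ss,Us) \<in> C" "j < length Us"
    and app: "Ap C Y V (Us!j) n r"
  shows "(Us!j = V \<and> r = 0) \<or> (\<exists>B m. m < n \<and> 1 \<le> r \<and> {#Y, B#} = {#E, Ss!j#} \<and> Ap C Y V B m (r - 1))"
  using app
proof (induction n arbitrary: r)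
  case 0
  then have "Us!j = V \<and> r = 0" by (rule ap0[OF _ VY])
  then show ?case by simp
next
  case (Suc n)
  have Uint: "Us!j \<in> intermediates C" using c by (rule inter_nth)
  from ap_dec[OF h1 Yni VY Suc.prems] obtain \<rho> where \<rho>: "\<rho> \<in> rxns C"
    "count (snd \<rho>) (Us!j) \<noteq> count (fst \<rho>) (Us!j)"
    "(\<exists>U. fst \<rho> = {#U#} \<and> Ap C Y V U n r) \<or> (\<exists>B. fst \<rho> = {#Y, B#} \<and> 1 \<le> r \<and> Ap C Y V B n (r - 1))"
    by blast
  from \<rho>(3) show ?case
  proof
    assume "\<exists>U. fst \<rho> = {#U#} \<and> Ap C Y V U n r"
    then obtain U where U: "fst \<rho> = {#U#}" "Ap C Y V U n r" by blast
    from \<rho>(1) U(1) obtain E' Ss' Us' j' where c': "(E',Ss',Us') \<in> C" "j' < length Us'" "U = Us'!j'"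
      "snd \<rho> = {#E', Ss'!j'#} \<or> snd \<rho> = {#E', Ss'!(Suc j')#}" by (rule single_src)
    have "E' \<noteq> Us!j" using nonint_E[OF h1 c'(1)] Uint by auto
    moreover have "Ss'!j' \<noteq> Us!j" "Ss'!(Suc j') \<noteq> Us!j"
      using nonint_S[OF h1 c'(1), of j'] nonint_S[OF h1 c'(1), of "Suc j'"] c'(2) Uint by auto
    ultimately have "count (snd \<rho>) (Us!j) = 0" using c'(4) by auto
    with \<rho>(2) U(1) have "count {#U#} (Us!j) \<noteq> 0" by simp
    then have "U = Us!j" by (simp split: if_split_asm)
    with U(2) have "(Us!j = V \<and> r = 0) \<or> (\<exists>B m. m < n \<and> 1 \<le> r \<and> {#Y, B#} = {#E, Ss!j#} \<and> Ap C Y V B m (r - 1))"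
      using Suc.IH by simp
    then show ?case
    proof (elim disjE exE conjE)
      fix B m assume "m < n" "1 \<le> r" "{#Y, B#} = {#E, Ss!j#}" "Ap C Y V B m (r - 1)"
      then show ?case using less_SucI[OF \<open>m < n\<close>] by blast
    qed simp
  next
    assume "\<exists>B. fst \<rho> = {#Y, B#} \<and> 1 \<le> r \<and> Ap C Y V B n (r - 1)"
    then obtain B where B: "fst \<rho> = {#Y, B#}" "1 \<le> r" "Ap C Y V B n (r - 1)" by blast
    from \<rho>(1) B(1) obtain E' Ss' Us' j' where c': "(E',Ss',Us') \<in> C" "j' < length Us'"
      "{#Y, B#} = {#E', Ss'!j'#}" "snd \<rho> = {#Us'!j'#}" by (rule pair_src)
    have "E' \<noteq> Us!j" using nonint_E[OF h1 c'(1)] Uint by auto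
    moreover have "Ss'!j' \<noteq> Us!j"
      using nonint_S[OF h1 c'(1), of j'] c'(2) Uint by auto
    ultimately have "count (fst \<rho>) (Us!j) = 0" using B(1) c'(3) by auto
    with \<rho>(2) c'(4) have "count {#Us'!j'#} (Us!j) \<noteq> 0" by simp
    then have eqU: "Us'!j' = Us!j" by (simp split: if_split_asm)
    have "(E',Ss',Us') = (E,Ss,Us)"
    proof -
      have "Us!j \<in> set Us'" using nth_mem[OF c'(2)] eqU by simp
      then show ?thesis by (rule inter_unique[OF h1 c'(1) c(1) _ nth_mem[OF c(2)]])
    qed
    then have eqs: "E' = E" "Ss' = Ss" "Us' = Us" by auto
    have "distinct Us" using h1_comp[OF h1 c(1)] by simp
    with eqU eqs c(2) c'(2) have "j' = j" by (simp add: nth_eq_iff_index_eq)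
    with c'(3) eqs B show ?case by blast
  qed
qed

definition concl where
  "concl C Ss V Y X r l \<longleftrightarrow> X \<in> set Ss \<and>
    (reacts_to C V X \<or>
     (1 \<le> r \<and> 2 \<le> l \<and>
      (\<exists>t i Zw W. t < r \<and> i \<le> l - 2 \<and>
         ({#Y, Zw#}, {#W#}) \<in> rxns C \<and> ({#W#}, {#Y, Zw#}) \<in> rxns C \<and>
         ({#W#}, {#Y, X#}) \<in> rxns C \<and>
         appears (yv_mono Y t V) (iter_tder C i (xvar Zw)) \<and>
         ((\<forall>l' r'. 1 \<le> l' \<and> l' < l \<longrightarrow>
             \<not> appears (yv_mono Y r' V) (iter_tder C l' (xvar X))) \<longrightarrow> t = r - 1))))"

lemma lift:
  assumes "concl C Ss V Y X r' m" "Ap C Y V X m r'" "1 \<le> m" "m < l" "r' \<le> r"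
  shows "concl C Ss V Y X r l"
proof -
  have nm: "\<not> (\<forall>l' r''. 1 \<le> l' \<and> l' < l \<longrightarrow> \<not> Ap C Y V X l' r'')"
    using assms(2,3,4) by blast
  have Xs: "X \<in> set Ss" using assms(1) unfolding concl_def by blast
  have "reacts_to C V X \<or> (\<exists>t i Zw W. t < r' \<and> i \<le> m - 2 \<and>
         ({#Y, Zw#}, {#W#}) \<in> rxns C \<and> ({#W#}, {#Y, Zw#}) \<in> rxns C \<and>
         ({#W#}, {#Y, X#}) \<in> rxns C \<and>
         appears (yv_mono Y t V) (iter_tder C i (xvar Zw)))"
    using assms(1) unfolding concl_def by blast
  then show ?thesis
  proof (elim disjE exE conjE)
    assume "reacts_to C V X" then show ?thesis using Xs unfolding concl_def by simp
  next
    fix t i Zw W assume w: "t < r'" "i \<le> m - 2"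
         "({#Y, Zw#}, {#W#}) \<in> rxns C" "({#W#}, {#Y, Zw#}) \<in> rxns C"
         "({#W#}, {#Y, X#}) \<in> rxns C"
         "appears (yv_mono Y t V) (iter_tder C i (xvar Zw))"
    have "t < r" "i \<le> l - 2" "1 \<le> r" "2 \<le> l" using w(1,2) assms(3,4,5) by auto
    with w(3-6) nm Xs show ?thesis unfolding concl_def by blast
  qed
qed

lemma h2_comp:
  assumes "H2 C P M" "(E,Ss,Us) \<in> C" "j < length Us"
  obtains \<beta> where "1 \<le> \<beta>" "\<beta> \<le> M" "set Ss \<subseteq> P \<beta>" "E \<notin> P \<beta>"
proof -
  have h: "\<forall>(Y, Ss, Us)\<in>C. \<forall>U\<in>set Us. \<exists>\<alpha>. 1 \<le> \<alpha> \<and> \<alpha> \<le> M \<and> set Ss \<subseteq> P \<alpha> \<and> Y \<notin> P \<alpha>"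
    using assms(1) unfolding H2_def by (elim conjE) assumption
  have "\<forall>U\<in>set Us. \<exists>\<alpha>. 1 \<le> \<alpha> \<and> \<alpha> \<le> M \<and> set Ss \<subseteq> P \<alpha> \<and> E \<notin> P \<alpha>"
    using bspec[OF h assms(2)] by simp
  then have "\<exists>\<alpha>. 1 \<le> \<alpha> \<and> \<alpha> \<le> M \<and> set Ss \<subseteq> P \<alpha> \<and> E \<notin> P \<alpha>"
    using nth_mem[OF assms(3)] by blast
  with that show ?thesis by blast
qed

lemma h2_disj:
  assumes "H2 C P M" "\<alpha> \<le> M" "\<beta> \<le> M" "x \<in> P \<alpha>" "x \<in> P \<beta>"
  shows "\<alpha> = \<beta>"
proof -
  have "\<forall>\<alpha>\<le>M. \<forall>\<beta>\<le>M. \<alpha> \<noteq> \<beta> \<longrightarrow> P \<alpha> \<inter> P \<beta> = {}"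
    using assms(1) unfolding H2_def by (elim conjE) assumption
  with assms(2-5) show ?thesis by blast
qed

lemma main_ind:
  assumes h1: "H1 C" and h2: "H2 C P M"
    and compV: "(Yt, Ss, Us) \<in> C" "V \<in> set Us"
    and Yni: "Y \<notin> intermediates C" and Yc: "(Y, Ss2, Us2) \<in> C" "set Ss2 = set Ss"
    and al: "1 \<le> \<alpha>" "\<alpha> \<le> M" "Y \<notin> P \<alpha>" "Yt \<notin> P \<alpha>"
  shows "X \<notin> intermediates C \<Longrightarrow> X \<in> P \<alpha> \<Longrightarrow> 1 \<le> l \<Longrightarrow> Ap C Y V X l r \<Longrightarrow> concl C Ss V Y X r l"
proof (induction l arbitrary: X r rule: less_induct)
  case (less l)
  have Vint: "V \<in> intermediates C" using compV by (rule inter_mem)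
  with Yni have VY: "V \<noteq> Y" by auto
  have XY: "X \<noteq> Y" using less.prems(2) al(3) by auto
  obtain n where ln: "l = Suc n" using less.prems(3) by (cases l) auto
  from ap_dec[OF h1 Yni VY less.prems(4)[unfolded ln]] obtain \<rho> where \<rho>: "\<rho> \<in> rxns C"
    "count (snd \<rho>) X \<noteq> count (fst \<rho>) X"
    "(\<exists>U. fst \<rho> = {#U#} \<and> Ap C Y V U n r) \<or> (\<exists>B. fst \<rho> = {#Y, B#} \<and> 1 \<le> r \<and> Ap C Y V B n (r - 1))"
    by blast
  from \<rho>(3) show ?case
  proof
    assume "\<exists>B. fst \<rho> = {#Y, B#} \<and> 1 \<le> r \<and> Ap C Y V B n (r - 1)"
    then obtain B where B: "fst \<rho> = {#Y, B#}" "1 \<le> r" "Ap C Y V B n (r - 1)" by blast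
    from \<rho>(1) B(1) obtain E' Ss' Us' j' where c': "(E',Ss',Us') \<in> C" "j' < length Us'"
      "{#Y, B#} = {#E', Ss'!j'#}" "snd \<rho> = {#Us'!j'#}" by (rule pair_src)
    have "Us'!j' \<noteq> X" using inter_nth[OF c'(1,2)] less.prems(1) by auto
    then have "count (snd \<rho>) X = 0" using c'(4) by simp
    with \<rho>(2) B(1) have "count {#Y, B#} X \<noteq> 0" by simp
    with XY have "B = X" by (simp split: if_split_asm)
    with B(3) have apx: "Ap C Y V X n (r - 1)" by simp
    have n1: "1 \<le> n"
    proof (rule ccontr)
      assume "\<not> 1 \<le> n" then have "n = 0" by simp
      with apx ap0[where C=C and z=X and r="r - 1", OF _ VY] have "X = V" by simp
      with Vint less.prems(1) show False by simp
    qed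
    have "concl C Ss V Y X (r - 1) n"
      using less.IH[of n X "r - 1"] ln n1 less.prems(1,2) apx by simp
    then show ?thesis by (rule lift) (use apx n1 ln in auto)
  next
    assume "\<exists>U. fst \<rho> = {#U#} \<and> Ap C Y V U n r"
    then obtain U where U: "fst \<rho> = {#U#}" "Ap C Y V U n r" by blast
    from \<rho>(1) U(1) obtain E Ss' Us' j where c: "(E,Ss',Us') \<in> C" "j < length Us'" "U = Us'!j"
      "snd \<rho> = {#E, Ss'!j#} \<or> snd \<rho> = {#E, Ss'!(Suc j)#}" by (rule single_src)
    obtain k where k: "k \<le> length Us'" "snd \<rho> = {#E, Ss'!k#}" "k = j \<or> k = Suc j"
      using c(2,4) by (metis Suc_leI less_imp_le)
    have hc: "length Ss' = Suc (length Us')" using h1_comp[OF h1 c(1)] by simp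
    have Uint: "U \<in> intermediates C" using inter_nth[OF c(1,2)] c(3) by simp
    then have "count (fst \<rho>) X = 0" using U(1) less.prems(1) by auto
    with \<rho>(2) k(2) have XES: "X = E \<or> X = Ss'!k" by (auto split: if_splits)
    from inter_lem[OF h1 Yni VY c(1,2) U(2)[unfolded c(3)]]
    show ?thesis
    proof (elim disjE exE conjE)
      assume UV: "Us'!j = V" "r = 0"
      have eqc: "(E,Ss',Us') = (Yt,Ss,Us)"
        using inter_unique[OF h1 c(1) compV(1), of V] UV c(2) compV(2) by (metis nth_mem)
      then have eqs: "E = Yt" "Ss' = Ss" "Us' = Us" by auto
      have "X \<noteq> E" using eqs al(4) less.prems(2) by auto
      with XES have XS: "X = Ss!k" using eqs by simp
      have "X \<in> set Ss" using XS k(1) hc eqs by simp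
      moreover have "reacts_to C V X"
      proof -
        have "\<rho> = ({#V#}, {#X, Yt#})"
          using U(1) c(3) UV(1) k(2) XS eqs by (simp add: prod_eq_iff add_mset_commute)
        with \<rho>(1) nonint_E[OF h1 compV(1)] show ?thesis unfolding reacts_to_def by blast
      qed
      ultimately show ?thesis by (simp add: concl_def)
    next
      fix B m assume bm: "m < n" "1 \<le> r" "{#Y, B#} = {#E, Ss'!j#}" "Ap C Y V B m (r - 1)"
      show ?thesis
      proof (cases "X = E")
        case True
        with XY have "Y \<noteq> E" by simp
        with bm(3) have "B = E" by (auto simp: mset2_eq)
        with bm(4) True have apx: "Ap C Y V X m (r - 1)" by simp
        have m1: "1 \<le> m"
        proof (rule ccontr)
          assume "\<not> 1 \<le> m" then have "m = 0" by simp
          with apx ap0[where C=C and z=X and r="r - 1", OF _ VY] have "X = V" by simp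
          with Vint less.prems(1) show False by simp
        qed
        have "concl C Ss V Y X (r - 1) m"
          using less.IH[of m X "r - 1"] ln bm(1) m1 less.prems(1,2) apx by simp
        then show ?thesis by (rule lift) (use apx m1 ln bm(1) in auto)
      next
        case False
        with XES have XS: "X = Ss'!k" by simp
        obtain \<beta> where \<beta>: "1 \<le> \<beta>" "\<beta> \<le> M" "set Ss' \<subseteq> P \<beta>" "E \<notin> P \<beta>"
          using h2_comp[OF h2 c(1,2)] by blast
        have "X \<in> P \<beta>" using XS k(1) hc \<beta>(3) by (metis le_imp_less_Suc nth_mem subsetD)
        with h2_disj[OF h2 al(2) \<beta>(2) less.prems(2)] have \<beta>\<alpha>: "\<beta> = \<alpha>" by simp
        have SjP: "Ss'!j \<in> P \<alpha>" using c(2) hc \<beta>(3) \<beta>\<alpha> by (metis less_SucI nth_mem subsetD)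
        then have "Y \<noteq> Ss'!j" using al(3) by auto
        with bm(3) have YE: "Y = E" and BS: "B = Ss'!j" by (auto simp: mset2_eq)
        have Sni: "Ss'!j \<notin> intermediates C" using nonint_S[OF h1 c(1), of j] c(2) by simp
        have aps: "Ap C Y V (Ss'!j) m (r - 1)" using bm(4) BS by simp
        have m1: "1 \<le> m"
        proof (rule ccontr)
          assume "\<not> 1 \<le> m" then have "m = 0" by simp
          with aps ap0[where C=C and z="Ss'!j" and r="r - 1", OF _ VY] have "Ss'!j = V" by simp
          with Vint Sni show False by simp
        qed
        have "concl C Ss V Y (Ss'!j) (r - 1) m"
          using less.IH[of m "Ss'!j" "r - 1"] ln bm(1) m1 Sni SjP aps by simp
        then have "Ss'!j \<in> set Ss2" using Yc(2) by (simp add: concl_def)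
        then obtain i where i: "i < length Ss2" "Ss2!i = Ss'!j" by (metis in_set_conv_nth)
        have hc2: "length Ss2 = Suc (length Us2)" using h1_comp[OF h1 Yc(1)] by simp
        have "(E,Ss',Us') = (Y,Ss2,Us2)"
          using cplx_unique[OF h1 c(1) Yc(1), of j i] c(2) i hc2 YE by simp
        then have "Ss' = Ss2" by simp
        then have Xin: "X \<in> set Ss" using XS k(1) hc Yc(2) by (metis le_imp_less_Suc nth_mem)
        have r1: "({#Y, Ss'!j#}, {#Us'!j#}) \<in> rxns C" using rxns_I1[OF c(1,2)] YE by simp
        have r2: "({#Us'!j#}, {#Y, Ss'!j#}) \<in> rxns C" using rxns_I2[OF c(1,2)] YE by simp
        have r3: "({#Us'!j#}, {#Y, X#}) \<in> rxns C"
          using \<rho>(1) U(1) c(3) k(2) XS YE by (metis prod.collapse)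
        have "r - 1 < r" "m \<le> l - 2" "2 \<le> l" using bm(1,2) ln by auto
        then show ?thesis unfolding concl_def using Xin r1 r2 r3 aps bm(2) by blast
      qed
    qed
  qed
qed

theorem mainTheorem13:
  fixes C :: "'s component set" and P :: "nat \<Rightarrow> 's set" and M :: nat
    and V Yt Y X :: 's and Ss Us :: "'s list" and r l :: nat and \<alpha> :: nat
  assumes h1: "H1 C" and h2: "H2 C P M"
    and compV: "(Yt, Ss, Us) \<in> C" "V \<in> set Us"
    and Y_enz: "Y \<notin> intermediates C" "\<exists>Ss' Us'. (Y, Ss', Us') \<in> C \<and> set Ss' = set Ss"
    and X_nonint: "X \<notin> intermediates C"
    and alpha: "1 \<le> \<alpha>" "\<alpha> \<le> M" "X \<in> P \<alpha>" "Y \<notin> P \<alpha>" "Yt \<notin> P \<alpha>"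
    and l_pos: "1 \<le> l"
    and app: "appears (yv_mono Y r V) (iter_tder C l (xvar X))"
  shows "X \<in> set Ss \<and>
    (reacts_to C V X \<or>
     (1 \<le> r \<and> 2 \<le> l \<and>
      (\<exists>t i Zw W. t < r \<and> i \<le> l - 2 \<and>
         ({#Y, Zw#}, {#W#}) \<in> rxns C \<and> ({#W#}, {#Y, Zw#}) \<in> rxns C \<and>
         ({#W#}, {#Y, X#}) \<in> rxns C \<and>
         appears (yv_mono Y t V) (iter_tder C i (xvar Zw)) \<and>
         ((\<forall>l' r'. 1 \<le> l' \<and> l' < l \<longrightarrow>
             \<not> appears (yv_mono Y r' V) (iter_tder C l' (xvar X))) \<longrightarrow> t = r - 1))))"
proof -
  from Y_enz(2) obtain Ss2 Us2 where Yc: "(Y, Ss2, Us2) \<in> C" "set Ss2 = set Ss" by blast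
  have "concl C Ss V Y X r l"
    by (rule main_ind[OF h1 h2 compV Y_enz(1) Yc alpha(1,2,4,5) X_nonint alpha(3) l_pos app])
  then show ?thesis unfolding concl_def .
qed

end
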